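(* On $T^*\mathrm{Eng}(n)$, for all $i,j,k,l\in\{1,\dots,n\}$ with $i\neq j$ and $k\neq l$, $$\{L_{ij},L_{kl}\}=P_{Y_{n+1}}\big(\delta_{ik}L_{jl}+\delta_{jl}L_{ik}-\delta_{il}L_{jk}-\delta_{jk}L_{il}\big).$$
   Context: $\mathrm{Eng}(n)$ is the simply connected Lie group with Lie algebra basis $X_1,\dots,X_n,Y_0,\dots,Y_{n+1}$ whose only nontrivial brackets (up to antisymmetry) are $[X_i,Y_0]=Y_i$ and $[X_i,Y_i]=Y_{n+1}$, $i=1,\dots,n$; all viewed as left-invariant vector fields. For a vector field $X$, $P_X(\lambda)=\langle\lambda,X\rangle$ on $T^*\mathrm{Eng}(n)$. Poisson brackets (canonical symplectic form) are normalized so that $\{P_X,P_Y\}=P_{[X,Y]}$ for left-invariant $X,Y$. For $i,j\in\{1,\dots,n\}$, $L_{ij}:=P_{X_i}P_{Y_j}-P_{X_j}P_{Y_i}$ (so $L_{ii}=0$); $\delta$ is the Kronecker delta. *)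

theory Defs
  imports Main "HOL.Real_Vector_Spaces"
begin

text \<open>Basis of the Lie algebra eng(n): X 1..X n, Y 0..Y (n+1).\<close>
datatype eng_basis = X nat | Y nat

definition eng_basis_set :: "nat \<Rightarrow> eng_basis set" where
  "eng_basis_set n = X ` {1..n} \<union> Y ` {0..Suc n}"

text \<open>Nontrivial brackets [X i, Y 0] = Y i and [X i, Y i] = Y (n+1), before antisymmetrization:
  eng_pos n a b c holds iff c occurs with coefficient 1 in one of the listed brackets [a,b].\<close>
definition eng_pos :: "nat \<Rightarrow> eng_basis \<Rightarrow> eng_basis \<Rightarrow> eng_basis \<Rightarrow> bool" where
  "eng_pos n a b c \<longleftrightarrow>
     (\<exists>i\<in>{1..n}. (a = X i \<and> b = Y 0 \<and> c = Y i) \<or> (a = X i \<and> b = Y i \<and> c = Y (Suc n)))"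

text \<open>Structure constants: [a,b] = sum over c of eng_coef n a b c times c.\<close>
definition eng_coef :: "nat \<Rightarrow> eng_basis \<Rightarrow> eng_basis \<Rightarrow> eng_basis \<Rightarrow> real" where
  "eng_coef n a b c = (if eng_pos n a b c then 1 else 0) - (if eng_pos n b a c then 1 else 0)"

definition poisson_bracket :: "('a::{real_algebra_1,comm_ring_1} \<Rightarrow> 'a \<Rightarrow> 'a) \<Rightarrow> bool" where
  "poisson_bracket br \<longleftrightarrow>
     (\<forall>x y z. br (x + y) z = br x z + br y z) \<and>
     (\<forall>c x y. br (c *\<^sub>R x) y = c *\<^sub>R br x y) \<and>
     (\<forall>x y. br x y = - br y x) \<and>
     (\<forall>x y z. br x (y * z) = br x y * z + y * br x z) \<and>
     (\<forall>x y z. br x (br y z) + br y (br z x) + br z (br x y) = 0)"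

definition eng_momenta :: "nat \<Rightarrow> ('a::{real_algebra_1,comm_ring_1} \<Rightarrow> 'a \<Rightarrow> 'a) \<Rightarrow> (eng_basis \<Rightarrow> 'a) \<Rightarrow> bool" where
  "eng_momenta n br P \<longleftrightarrow>
     (\<forall>a\<in>eng_basis_set n. \<forall>b\<in>eng_basis_set n.
        br (P a) (P b) = (\<Sum>c\<in>eng_basis_set n. eng_coef n a b c *\<^sub>R P c))"

definition eng_L :: "(eng_basis \<Rightarrow> 'a::comm_ring_1) \<Rightarrow> nat \<Rightarrow> nat \<Rightarrow> 'a" where
  "eng_L P i j = P (X i) * P (Y j) - P (X j) * P (Y i)"

definition kdelta :: "nat \<Rightarrow> nat \<Rightarrow> 'a::comm_ring_1" where
  "kdelta i j = (if i = j then 1 else 0)"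

end

theory Submission
  imports Defs
begin

lemma pb_add1: "poisson_bracket br \<Longrightarrow> br (x + y) z = br x z + br y z"
  unfolding poisson_bracket_def by meson
lemma pb_anti: "poisson_bracket br \<Longrightarrow> br x y = - br y x"
  unfolding poisson_bracket_def by meson
lemma pb_mult2: "poisson_bracket br \<Longrightarrow> br x (y * z) = br x y * z + y * br x z"
  unfolding poisson_bracket_def by meson
lemma pb_add2: "poisson_bracket br \<Longrightarrow> br z (x + y) = br z x + br z y"
proof -
  assume h: "poisson_bracket br"
  have "br z (x + y) = - br (x + y) z" using pb_anti[OF h] by blast
  also have "\<dots> = - (br x z + br y z)" using pb_add1[OF h] by simp
  also have "\<dots> = br z x + br z y" using pb_anti[OF h, of x z] pb_anti[OF h, of y z] by simp
  finally show ?thesis .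
qed
lemma pb_zero1: "poisson_bracket br \<Longrightarrow> br 0 z = 0"
  using pb_add1[of br 0 0 z] by simp
lemma pb_neg1: "poisson_bracket br \<Longrightarrow> br (- x) z = - br x z"
  using pb_add1[of br "- x" x z] pb_zero1[of br z] by (simp add: eq_neg_iff_add_eq_0)
lemma pb_diff1: "poisson_bracket br \<Longrightarrow> br (x - y) z = br x z - br y z"
  using pb_add1[of br x "- y" z] pb_neg1[of br y z] by simp
lemma pb_diff2: "poisson_bracket br \<Longrightarrow> br z (x - y) = br z x - br z y"
proof -
  assume h: "poisson_bracket br"
  have "br z (x - y) = - br (x - y) z" using pb_anti[OF h] by blast
  also have "\<dots> = - (br x z - br y z)" using pb_diff1[OF h] by simp
  also have "\<dots> = br z x - br z y" using pb_anti[OF h, of x z] pb_anti[OF h, of y z] by simp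
  finally show ?thesis .
qed
lemma pb_mult1: "poisson_bracket br \<Longrightarrow> br (x * y) z = br x z * y + x * br y z"
proof -
  assume h: "poisson_bracket br"
  have "br (x * y) z = - br z (x * y)" using pb_anti[OF h] by blast
  also have "\<dots> = - (br z x * y + x * br z y)" using pb_mult2[OF h] by simp
  also have "\<dots> = br x z * y + x * br y z"
    using pb_anti[OF h, of z x] pb_anti[OF h, of z y] by (simp add: algebra_simps)
  finally show ?thesis .
qed

lemma XY_in: "i \<in> {1..n} \<Longrightarrow> X i \<in> eng_basis_set n" "j \<in> {1..n} \<Longrightarrow> Y j \<in> eng_basis_set n"
  "Y (Suc n) \<in> eng_basis_set n"
  unfolding eng_basis_set_def by auto

lemma brXY:
  assumes "eng_momenta n br P" "i \<in> {1..n}" "j \<in> {1..n}"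
  shows "br (P (X i)) (P (Y j)) = kdelta i j * P (Y (Suc n))"
proof -
  have c: "eng_coef n (X i) (Y j) c = (if c = Y (Suc n) then kdelta i j else 0)" for c
    using assms(2,3) unfolding eng_coef_def eng_pos_def kdelta_def by auto
  have "br (P (X i)) (P (Y j)) = (\<Sum>c\<in>eng_basis_set n. eng_coef n (X i) (Y j) c *\<^sub>R P c)"
    using assms XY_in unfolding eng_momenta_def by blast
  also have "\<dots> = (\<Sum>c\<in>eng_basis_set n. if c = Y (Suc n) then kdelta i j *\<^sub>R P c else 0)"
    by (rule sum.cong) (auto simp: c)
  also have "\<dots> = kdelta i j *\<^sub>R P (Y (Suc n))"
    using XY_in(3) by (simp add: eng_basis_set_def)
  finally show ?thesis by (simp add: kdelta_def)
qed

lemma brXX: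
  assumes "eng_momenta n br P" "i \<in> {1..n}" "j \<in> {1..n}"
  shows "br (P (X i)) (P (X j)) = 0"
proof -
  have c: "eng_coef n (X i) (X j) c = 0" for c
    unfolding eng_coef_def eng_pos_def by auto
  show ?thesis using assms XY_in unfolding eng_momenta_def by (simp add: c)
qed

lemma brYY:
  assumes "eng_momenta n br P" "i \<in> {1..n}" "j \<in> {1..n}"
  shows "br (P (Y i)) (P (Y j)) = 0"
proof -
  have c: "eng_coef n (Y i) (Y j) c = 0" for c
    unfolding eng_coef_def eng_pos_def by auto
  show ?thesis using assms XY_in unfolding eng_momenta_def by (simp add: c)
qed

theorem lemma8:
  fixes br :: "'a::{real_algebra_1,comm_ring_1} \<Rightarrow> 'a \<Rightarrow> 'a"
    and P :: "eng_basis \<Rightarrow> 'a" and n i j k l :: nat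
  assumes "poisson_bracket br"
    and "eng_momenta n br P"
    and "i \<in> {1..n}" "j \<in> {1..n}" "k \<in> {1..n}" "l \<in> {1..n}"
    and "i \<noteq> j" "k \<noteq> l"
  shows "br (eng_L P i j) (eng_L P k l) =
         P (Y (Suc n)) * (kdelta i k * eng_L P j l + kdelta j l * eng_L P i k
                          - kdelta i l * eng_L P j k - kdelta j k * eng_L P i l)"
proof -
  have YX: "br (P (Y a)) (P (X b)) = - (kdelta a b * P (Y (Suc n)))"
    if "a \<in> {1..n}" "b \<in> {1..n}" for a b
    using pb_anti[OF assms(1), of "P (Y a)" "P (X b)"] brXY[OF assms(2) that(2,1)] by (simp add: kdelta_def)
  note XY = brXY[OF assms(2)] and XX = brXX[OF assms(2)] and YY = brYY[OF assms(2)]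
  show ?thesis
    unfolding eng_L_def
    apply (simp only: pb_diff1[OF assms(1)] pb_diff2[OF assms(1)] pb_mult1[OF assms(1)]
        pb_mult2[OF assms(1)])
    apply (simp only: XY[OF assms(3) assms(5)] XX[OF assms(3) assms(5)] YY[OF assms(3) assms(5)] YX[OF assms(3) assms(5)] XY[OF assms(5) assms(3)] XY[OF assms(3) assms(6)] XX[OF assms(3) assms(6)] YY[OF assms(3) assms(6)] YX[OF assms(3) assms(6)] XY[OF assms(6) assms(3)] XY[OF assms(4) assms(5)] XX[OF assms(4) assms(5)] YY[OF assms(4) assms(5)] YX[OF assms(4) assms(5)] XY[OF assms(5) assms(4)] XY[OF assms(4) assms(6)] XX[OF assms(4) assms(6)] YY[OF assms(4) assms(6)] YX[OF assms(4) assms(6)] XY[OF assms(6) assms(4)])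
    apply (simp add: algebra_simps)
    done
qed

end
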